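(* There is a function $\widehat g(n)=\Theta(\log^2 n)$ such that for all $n$, all distinct $i,j\in[n]$, every real $\delta\ge0$ and every integer $0\le t\le n\log n$, $$\sum_{m=2}^{n-1}\mathcal{P}^{n,t}_{1,m}\big([n]\times\overline{j\pm\delta}\big)\le 2\delta+\widehat g(n),$$ where $\widehat g$ does not depend on $i,j,\delta,t$.
   Context: The random-to-random insertions shuffle on a deck of $n$ cards numbered $1,\dots,n$: at each step a card is chosen uniformly at random, removed, and reinserted at a uniformly random position. Orderings are identified with $\sigma\in S_n$, $\sigma(k)$ being the position of card $k$; $\Pi_t$ is the induced random walk on $S_n$ and $\mathbb{P}^n_\sigma$ its law started at $\sigma$. $A^t$ is the (random) set of cards not chosen for removal in the first $t$ shuffles. For $k$ and $M\ge0$, $\overline{k\pm M}=[n]\cap[k-M,k+M]$. For distinct $i,j\in[n]$, $m_1\in[n-1]$, $m_2\in[n]$ and integer $t\ge0$, let $\sigma\in S_n$ be any permutation with $\sigma(j)=m_2$ and $\sigma(i)=m_1+1$ if $m_2\le m_1$, $\sigma(i)=m_1$ if $m_2>m_1$, and define the probability measure on $[n]\times[n]$ $$\mathcal{P}^{n,t}_{m_1,m_2}(\cdot)=\mathbb{P}^n_\sigma\big((\Pi_t(i),\Pi_t(j))\in\cdot\,\big|\,i,j\in A^t\big).$$ $\log$ is the natural logarithm. *)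

theory Defs
  imports "HOL-Probability.Probability" "HOL-Library.Landau_Symbols" "HOL-Combinatorics.Permutations"
begin

text \<open>Cards and positions are numbered 1..n. An ordering is a permutation
  sigma permuting {1..n}, sigma k = position of card k.
  rtr_move n sigma c p: remove card c and reinsert it at position p.\<close>
definition rtr_move :: "nat \<Rightarrow> (nat \<Rightarrow> nat) \<Rightarrow> nat \<Rightarrow> nat \<Rightarrow> (nat \<Rightarrow> nat)" where
  "rtr_move n \<sigma> c p = (\<lambda>k. if k = c then p
      else if \<sigma> c < p \<and> \<sigma> c < \<sigma> k \<and> \<sigma> k \<le> p then \<sigma> k - 1
      else if p < \<sigma> c \<and> p \<le> \<sigma> k \<and> \<sigma> k < \<sigma> c then \<sigma> k + 1
      else \<sigma> k)"

text \<open>Joint law of (Pi_t, set of cards chosen for removal in the first t shuffles),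
  started at sigma: at each step card c and position p are chosen independently
  and uniformly from [n].\<close>
fun rtr_walk :: "nat \<Rightarrow> nat \<Rightarrow> (nat \<Rightarrow> nat) \<Rightarrow> ((nat \<Rightarrow> nat) \<times> nat set) pmf" where
  "rtr_walk n 0 \<sigma> = return_pmf (\<sigma>, {})"
| "rtr_walk n (Suc t) \<sigma> =
     bind_pmf (rtr_walk n t \<sigma>) (\<lambda>(\<tau>, C).
       map_pmf (\<lambda>(c, p). (rtr_move n \<tau> c p, insert c C))
               (pmf_of_set ({1..n} \<times> {1..n})))"

definition A_set :: "nat \<Rightarrow> nat set \<Rightarrow> nat set" where
  "A_set n C = {1..n} - C"

definition cond_pair_prob ::
  "nat \<Rightarrow> nat \<Rightarrow> (nat \<Rightarrow> nat) \<Rightarrow> nat \<Rightarrow> nat \<Rightarrow> (nat \<times> nat) set \<Rightarrow> real" where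
  "cond_pair_prob n t \<sigma> i j S =
     measure_pmf.prob (rtr_walk n t \<sigma>)
        {(\<tau>, C). (\<tau> i, \<tau> j) \<in> S \<and> i \<in> A_set n C \<and> j \<in> A_set n C}
     / measure_pmf.prob (rtr_walk n t \<sigma>)
        {(\<tau>, C). i \<in> A_set n C \<and> j \<in> A_set n C}"

definition window :: "nat \<Rightarrow> nat \<Rightarrow> real \<Rightarrow> nat set" where
  "window n k M = {x \<in> {1..n}. real k - M \<le> real x \<and> real x \<le> real k + M}"

end

theory Submission
  imports Defs "HOL-Real_Asymp.Real_Asymp"
begin

definition mvpos :: "nat \<Rightarrow> nat \<Rightarrow> nat \<Rightarrow> nat" where
  "mvpos x p s = (if s = x then p else if x < p \<and> x < s \<and> s \<le> p then s - 1
      else if p < x \<and> p \<le> s \<and> s < x then s + 1 else s)"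

lemma rtr_move_eq:
  assumes "inj_on \<tau> {1..n}" "c \<in> {1..n}" "k \<in> {1..n}"
  shows "rtr_move n \<tau> c p k = mvpos (\<tau> c) p (\<tau> k)"
proof (cases "k = c")
  case True then show ?thesis by (simp add: rtr_move_def mvpos_def)
next
  case False
  then have "\<tau> k \<noteq> \<tau> c" using assms inj_on_eq_iff by metis
  then show ?thesis using False by (simp add: rtr_move_def mvpos_def)
qed

lemma mvpos_inv:
  assumes "x \<in> {1..n}" "p \<in> {1..n}" "s \<in> {1..n}"
  shows "mvpos p x (mvpos x p s) = s"
  using assms unfolding mvpos_def by (auto split: if_splits)
lemma mvpos_range:
  assumes "x \<in> {1..n}" "p \<in> {1..n}" "s \<in> {1..n}"
  shows "mvpos x p s \<in> {1..n}"
  using assms unfolding mvpos_def by (auto split: if_splits)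
lemma mvpos_mono:
  assumes "s \<noteq> x" "s' \<noteq> x" "s < s'"
  shows "mvpos x p s < mvpos x p s'"
  using assms unfolding mvpos_def by (auto split: if_splits)

lemma mvpos_bij:
  assumes "x \<in> {1..n}" "p \<in> {1..n}"
  shows "bij_betw (mvpos x p) {1..n} {1..n}"
proof (rule bij_betw_byWitness[where f'="mvpos p x"])
  show "\<forall>a\<in>{1..n}. mvpos p x (mvpos x p a) = a" using mvpos_inv[OF assms] by blast
  show "\<forall>a\<in>{1..n}. mvpos x p (mvpos p x a) = a" using mvpos_inv[OF assms(2,1)] by blast
  show "mvpos x p ` {1..n} \<subseteq> {1..n}" using mvpos_range[OF assms] by blast
  show "mvpos p x ` {1..n} \<subseteq> {1..n}" using mvpos_range[OF assms(2,1)] by blast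
qed

lemma move_bij:
  assumes "bij_betw \<tau> {1..n} {1..n}" "c \<in> {1..n}" "p \<in> {1..n}"
  shows "bij_betw (rtr_move n \<tau> c p) {1..n} {1..n}"
proof -
  have inj: "inj_on \<tau> {1..n}" using assms(1) bij_betw_def by blast
  have tc: "\<tau> c \<in> {1..n}" using assms(1,2) bij_betwE by blast
  have b: "bij_betw (mvpos (\<tau> c) p \<circ> \<tau>) {1..n} {1..n}"
    using bij_betw_trans[OF assms(1) mvpos_bij[OF tc assms(3)]] .
  have "\<And>k. k \<in> {1..n} \<Longrightarrow> (mvpos (\<tau> c) p \<circ> \<tau>) k = rtr_move n \<tau> c p k"
    using rtr_move_eq[OF inj assms(2)] by simp
  then show ?thesis using bij_betw_cong[of "{1..n}" "mvpos (\<tau> c) p \<circ> \<tau>" "rtr_move n \<tau> c p" "{1..n}"] b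
    by simp
qed

lemma move_order:
  assumes "bij_betw \<tau> {1..n} {1..n}" "c \<in> {1..n}" "i \<in> {1..n}" "j \<in> {1..n}"
    "c \<noteq> i" "c \<noteq> j" "\<tau> i < \<tau> j"
  shows "rtr_move n \<tau> c p i < rtr_move n \<tau> c p j"
proof -
  have inj: "inj_on \<tau> {1..n}" using assms(1) bij_betw_def by blast
  have "\<tau> i \<noteq> \<tau> c" "\<tau> j \<noteq> \<tau> c" using inj assms inj_on_eq_iff by metis+
  then show ?thesis using rtr_move_eq[OF inj assms(2) assms(3)] rtr_move_eq[OF inj assms(2) assms(4)]
      mvpos_mono assms(7) by simp
qed


lemma walk_inv:
  assumes "n \<ge> 1" "bij_betw \<sigma> {1..n} {1..n}" "i \<in> {1..n}" "j \<in> {1..n}" "\<sigma> i < \<sigma> j"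
  shows "x \<in> set_pmf (rtr_walk n t \<sigma>) \<Longrightarrow>
    bij_betw (fst x) {1..n} {1..n} \<and> (i \<notin> snd x \<and> j \<notin> snd x \<longrightarrow> fst x i < fst x j)"
proof (induction t arbitrary: x)
  case 0
  then show ?case using assms by simp
next
  case (Suc t)
  have ne: "{1..n} \<times> {1..n} \<noteq> {}" using assms(1) by auto
  from Suc.prems obtain \<tau> C c p where x: "(\<tau>, C) \<in> set_pmf (rtr_walk n t \<sigma>)"
    "c \<in> {1..n}" "p \<in> {1..n}" "x = (rtr_move n \<tau> c p, insert c C)"
    using ne by (auto simp: set_pmf_of_set)
  from Suc.IH[OF x(1)] have ih: "bij_betw \<tau> {1..n} {1..n}" "i \<notin> C \<and> j \<notin> C \<longrightarrow> \<tau> i < \<tau> j"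
    by auto
  have "i \<notin> insert c C \<and> j \<notin> insert c C \<longrightarrow> rtr_move n \<tau> c p i < rtr_move n \<tau> c p j"
  proof
    assume h: "i \<notin> insert c C \<and> j \<notin> insert c C"
    then have h1: "c \<noteq> i" "c \<noteq> j" "\<tau> i < \<tau> j" using ih(2) by auto
    show "rtr_move n \<tau> c p i < rtr_move n \<tau> c p j"
      by (rule move_order[OF ih(1) x(2) assms(3,4) h1])
  qed
  then show ?case using move_bij[OF ih(1) x(2,3)] x(4) by simp
qed



definition dn :: "nat \<Rightarrow> nat \<Rightarrow> real" where "dn n s = (real s - 2) * (real n - real s + 1)"
definition up :: "nat \<Rightarrow> nat \<Rightarrow> real" where "up n s = (real n - real s) * real s"
definition st :: "nat \<Rightarrow> nat \<Rightarrow> real" where "st n s = real n * (real n - 2) - dn n s - up n s"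
definition Gc :: "nat \<Rightarrow> nat \<Rightarrow> nat \<Rightarrow> real" where
  "Gc n s y = (if y = s then st n s else 0) + (if y + 1 = s then dn n s else 0)
     + (if y = s + 1 then up n s else 0)"

lemma card_bij_filter:
  assumes "bij_betw \<tau> A B"
  shows "card {c\<in>A. P (\<tau> c)} = card {x\<in>B. P x}"
proof -
  have inj: "inj_on \<tau> {c\<in>A. P (\<tau> c)}"
    by (rule inj_on_subset[OF bij_betw_imp_inj_on[OF assms]]) blast
  have im: "\<tau> ` A = B" by (rule bij_betw_imp_surj_on[OF assms])
  have "\<tau> ` {c\<in>A. P (\<tau> c)} = {x\<in>B. P x}"
  proof
    show "\<tau> ` {c\<in>A. P (\<tau> c)} \<subseteq> {x\<in>B. P x}" using im by blast
    show "{x\<in>B. P x} \<subseteq> \<tau> ` {c\<in>A. P (\<tau> c)}"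
    proof
      fix x assume "x \<in> {x\<in>B. P x}"
      then obtain c where "c \<in> A" "x = \<tau> c" "P x" using im by blast
      then show "x \<in> \<tau> ` {c\<in>A. P (\<tau> c)}" by blast
    qed
  qed
  then show ?thesis using card_image[OF inj] by simp
qed

lemma count_lemma:
  assumes b: "bij_betw \<tau> {1..n} {1..n}" and ij: "i \<in> {1..n}" "j \<in> {1..n}" "i \<noteq> j"
    and lt: "\<tau> i < \<tau> j"
  shows "real (card {(c,p) \<in> ({1..n}-{i,j}) \<times> {1..n}. rtr_move n \<tau> c p j = y}) = Gc n (\<tau> j) y"
proof -
  define s where "s = \<tau> j"
  define a where "a = \<tau> i"
  have inj: "inj_on \<tau> {1..n}" using b bij_betw_def by blast
  have a1: "a \<in> {1..n}" "s \<in> {1..n}" using b ij bij_betwE unfolding a_def s_def by blast+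
  have as: "a < s" using lt unfolding a_def s_def .
  define S where "S = ({1..n}-{i,j}) \<times> {1..n}"
  define L where "L = {c \<in> {1..n}-{i,j}. \<tau> c < s}"
  define R where "R = {c \<in> {1..n}-{i,j}. s < \<tau> c}"
  have L_eq: "L = {c \<in> {1..n}. \<tau> c < s \<and> \<tau> c \<noteq> a}"
  proof -
    have e: "\<And>c. c \<in> {1..n} \<Longrightarrow> (\<tau> c = a) = (c = i)"
      using inj_on_eq_iff[OF inj] ij(1) unfolding a_def by blast
    show ?thesis unfolding L_def using e unfolding s_def by force
  qed
  have "card L = card {x \<in> {1..n}. x < s \<and> x \<noteq> a}"
    unfolding L_eq by (rule card_bij_filter[OF b])
  also have "{x \<in> {1..n}. x < s \<and> x \<noteq> a} = {1..<s} - {a}" using a1 as by auto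
  also have "card \<dots> = s - 2" using a1 as by simp
  finally have cL: "card L = s - 2" .
  have R_eq: "R = {c \<in> {1..n}. s < \<tau> c}"
    unfolding R_def using as unfolding a_def s_def by force
  have "card R = card {x \<in> {1..n}. s < x}"
    unfolding R_eq by (rule card_bij_filter[OF b])
  also have "{x \<in> {1..n}. s < x} = {s<..n}" by auto
  finally have cR: "card R = n - s" by simp
  define Dn where "Dn = L \<times> {s..n}"
  define Up where "Up = R \<times> {1..s}"
  have cDn: "card Dn = (s - 2) * (n + 1 - s)" unfolding Dn_def using cL by (simp add: card_cartesian_product)
  have cUp: "card Up = (n - s) * s" unfolding Up_def using cR by (simp add: card_cartesian_product)
  have cS: "card S = (n - 2) * n" unfolding S_def using ij by (simp add: card_cartesian_product)
  have sub: "Dn \<subseteq> S" "Up \<subseteq> S" unfolding Dn_def Up_def L_def R_def S_def using a1 by auto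
  have disj: "Dn \<inter> Up = {}" unfolding Dn_def Up_def L_def R_def by auto
  have s2: "s \<ge> 2" using a1 as by auto
  have fin: "finite S" "finite Dn" "finite Up" unfolding S_def Dn_def Up_def L_def R_def by auto
  have mv: "rtr_move n \<tau> c p j = (if (c,p) \<in> Dn then s - 1 else if (c,p) \<in> Up then s + 1 else s)"
    if "(c,p) \<in> S" for c p
  proof -
    from that have c: "c \<in> {1..n}" "c \<noteq> i" "c \<noteq> j" "p \<in> {1..n}" by (auto simp: S_def)
    have m: "rtr_move n \<tau> c p j = (if \<tau> c < p \<and> \<tau> c < s \<and> s \<le> p then s - 1
        else if p < \<tau> c \<and> p \<le> s \<and> s < \<tau> c then s + 1 else s)"
      using c(3) by (simp add: rtr_move_def s_def)
    have d: "(c,p) \<in> Dn \<longleftrightarrow> \<tau> c < s \<and> s \<le> p" using c by (auto simp: Dn_def L_def)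
    have u: "(c,p) \<in> Up \<longleftrightarrow> s < \<tau> c \<and> p \<le> s" using c by (auto simp: Up_def R_def)
    show ?thesis unfolding m d u by auto
  qed
  let ?Sy = "{(c,p) \<in> S. rtr_move n \<tau> c p j = y}"
  have key: "rtr_move n \<tau> c p j = y \<longleftrightarrow> ((c,p)\<in>Dn \<and> y + 1 = s) \<or> ((c,p)\<in>Up \<and> y = s + 1)
      \<or> ((c,p)\<notin>Dn \<and> (c,p)\<notin>Up \<and> y = s)" if "(c,p) \<in> S" for c p
    unfolding mv[OF that] using disj s2 by auto
  have cSy: "card ?Sy = (if y = s then card S - card Dn - card Up else 0)
       + (if y + 1 = s then card Dn else 0) + (if y = s + 1 then card Up else 0)"
  proof (cases "y = s")
    case True
    then have "?Sy = S - (Dn \<union> Up)" using key by auto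
    moreover have "card (S - (Dn \<union> Up)) = card S - card Dn - card Up"
      using sub disj fin by (simp add: card_Diff_subset card_Un_disjoint)
    ultimately show ?thesis using True by simp
  next
    case F1: False
    show ?thesis
    proof (cases "y + 1 = s")
      case True
      then have "?Sy = Dn" using key sub F1 by auto
      then show ?thesis using True F1 by simp
    next
      case F2: False
      show ?thesis
      proof (cases "y = s + 1")
        case True
        then have "?Sy = Up" using key sub F1 F2 by auto
        then show ?thesis using True F1 F2 by simp
      next
        case F3: False
        have e: "?Sy = {}" using key F1 F2 F3 by auto
        show ?thesis unfolding e using F1 F2 F3 by simp
      qed
    qed
  qed
  have "card Dn + card Up \<le> card S"
    using sub disj fin by (metis card_Un_disjoint card_mono le_sup_iff)
  then have eq: "real (card ?Sy) = (if y = s then real (card S) - real (card Dn) - real (card Up) else 0)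
       + (if y + 1 = s then real (card Dn) else 0) + (if y = s + 1 then real (card Up) else 0)"
    unfolding cSy by (auto simp: of_nat_diff)
  have r1: "real (card Dn) = dn n s" unfolding cDn dn_def using s2 a1
    by (simp add: of_nat_diff)
  have r2: "real (card Up) = up n s" unfolding cUp up_def using a1
    by (simp add: of_nat_diff)
  have r3: "real (card S) = real n * (real n - 2)" unfolding cS using ij
    by (cases n) (auto simp: of_nat_diff algebra_simps)
  have eq2: "real (card ?Sy) = Gc n s y" using eq unfolding r1 r2 r3 Gc_def st_def by simp
  then show ?thesis unfolding S_def s_def .
qed



lemma measure_bind_pmf_real:
  "measure_pmf.prob (bind_pmf M N) X = (\<integral>x. measure_pmf.prob (N x) X \<partial>M)"
proof -
  have int: "integrable (measure_pmf M) (\<lambda>x. measure_pmf.prob (N x) X)"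
    by (rule measure_pmf.integrable_const_bound[where B=1]) auto
  have "ennreal (measure_pmf.prob (bind_pmf M N) X) = emeasure (bind_pmf M N) X"
    by (simp add: measure_pmf.emeasure_eq_measure)
  also have "\<dots> = (\<integral>\<^sup>+x. emeasure (N x) X \<partial>M)"
    by (rule emeasure_bind_pmf)
  also have "\<dots> = (\<integral>\<^sup>+x. ennreal (measure_pmf.prob (N x) X) \<partial>M)"
    by (simp add: measure_pmf.emeasure_eq_measure)
  also have "\<dots> = ennreal (\<integral>x. measure_pmf.prob (N x) X \<partial>M)"
    by (rule nn_integral_eq_integral[OF int]) auto
  finally show ?thesis by (simp add: integral_nonneg_AE)
qed

definition Ev :: "nat \<Rightarrow> nat \<Rightarrow> nat \<Rightarrow> ((nat \<Rightarrow> nat) \<times> nat set) set" where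
  "Ev i j y = {(\<tau>, C). \<tau> j = y \<and> i \<notin> C \<and> j \<notin> C}"

definition Q :: "nat \<Rightarrow> nat \<Rightarrow> nat \<Rightarrow> nat \<Rightarrow> (nat \<Rightarrow> nat) \<Rightarrow> nat \<Rightarrow> real" where
  "Q n i j t \<sigma> y = measure_pmf.prob (rtr_walk n t \<sigma>) (Ev i j y)"

lemma inner_prob:
  assumes n1: "n \<ge> 1" and b: "bij_betw \<tau> {1..n} {1..n}" and ij: "i \<in> {1..n}" "j \<in> {1..n}" "i \<noteq> j"
    and ord: "i \<notin> C \<and> j \<notin> C \<longrightarrow> \<tau> i < \<tau> j"
  shows "measure_pmf.prob (map_pmf (\<lambda>(c, p). (rtr_move n \<tau> c p, insert c C))
            (pmf_of_set ({1..n} \<times> {1..n}))) (Ev i j y)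
       = (if i \<notin> C \<and> j \<notin> C then Gc n (\<tau> j) y else 0) / (real n)^2"
proof -
  have ne: "{1..n} \<times> {1..n} \<noteq> {}" using n1 by auto
  have "measure_pmf.prob (map_pmf (\<lambda>(c, p). (rtr_move n \<tau> c p, insert c C))
            (pmf_of_set ({1..n} \<times> {1..n}))) (Ev i j y)
      = real (card ({1..n} \<times> {1..n} \<inter> (\<lambda>(c, p). (rtr_move n \<tau> c p, insert c C)) -` Ev i j y))
         / real (card ({1..n} \<times> {1..n}))"
    using ne by (simp add: measure_pmf_of_set)
  also have "card ({1..n} \<times> {1..n}) = n * n" by (simp add: card_cartesian_product)
  also have "{1..n} \<times> {1..n} \<inter> (\<lambda>(c, p). (rtr_move n \<tau> c p, insert c C)) -` Ev i j y
      = (if i \<notin> C \<and> j \<notin> C then {(c,p) \<in> ({1..n}-{i,j}) \<times> {1..n}. rtr_move n \<tau> c p j = y} else {})"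
    unfolding Ev_def by auto
  finally show ?thesis
    using count_lemma[OF b ij] ord by (auto simp: power2_eq_square)
qed

lemma Gc_ind:
  assumes "y \<ge> 1"
  shows "(if i \<notin> C \<and> j \<notin> C then Gc n (\<tau> j) y else 0)
    = st n y * indicator (Ev i j y) (\<tau>, C) + dn n (y+1) * indicator (Ev i j (y+1)) (\<tau>, C)
      + up n (y-1) * indicator (Ev i j (y-1)) (\<tau>, C)"
  using assms unfolding Gc_def Ev_def indicator_def by auto

lemma step_Q:
  assumes n1: "n \<ge> 1" and sig: "bij_betw \<sigma> {1..n} {1..n}"
    and ij: "i \<in> {1..n}" "j \<in> {1..n}" "i \<noteq> j" "\<sigma> i < \<sigma> j" and y1: "y \<ge> 1"
  shows "Q n i j (Suc t) \<sigma> y = (st n y * Q n i j t \<sigma> y + dn n (y+1) * Q n i j t \<sigma> (y+1)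
            + up n (y-1) * Q n i j t \<sigma> (y-1)) / (real n)^2"
proof -
  let ?W = "rtr_walk n t \<sigma>"
  let ?f = "\<lambda>x. (st n y * indicator (Ev i j y) x + dn n (y+1) * indicator (Ev i j (y+1)) x
      + up n (y-1) * indicator (Ev i j (y-1)) x) / (real n)^2"
  have "Q n i j (Suc t) \<sigma> y = (\<integral>x. measure_pmf.prob ((\<lambda>(\<tau>, C).
       map_pmf (\<lambda>(c, p). (rtr_move n \<tau> c p, insert c C)) (pmf_of_set ({1..n} \<times> {1..n}))) x) (Ev i j y) \<partial>?W)"
    unfolding Q_def by (simp add: measure_bind_pmf_real)
  also have "\<dots> = (\<integral>x. ?f x \<partial>?W)"
  proof (rule integral_cong_AE)
    show "AE x in measure_pmf ?W. measure_pmf.prob ((\<lambda>(\<tau>, C).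
       map_pmf (\<lambda>(c, p). (rtr_move n \<tau> c p, insert c C)) (pmf_of_set ({1..n} \<times> {1..n}))) x) (Ev i j y) = ?f x"
    proof (rule AE_pmfI)
      fix x assume x: "x \<in> set_pmf ?W"
      obtain \<tau> C where xe: "x = (\<tau>, C)" by (cases x)
      have inv: "bij_betw \<tau> {1..n} {1..n}" "i \<notin> C \<and> j \<notin> C \<longrightarrow> \<tau> i < \<tau> j"
        using walk_inv[OF n1 sig ij(1,2) ij(4) x] xe by auto
      show "measure_pmf.prob ((\<lambda>(\<tau>, C).
       map_pmf (\<lambda>(c, p). (rtr_move n \<tau> c p, insert c C)) (pmf_of_set ({1..n} \<times> {1..n}))) x) (Ev i j y) = ?f x"
        unfolding xe using inner_prob[OF n1 inv(1) ij(1,2,3) inv(2), of y] Gc_ind[OF y1, of i C j n \<tau>]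
        by simp
    qed
  qed simp_all
  also have "\<dots> = (st n y * Q n i j t \<sigma> y + dn n (y+1) * Q n i j t \<sigma> (y+1)
            + up n (y-1) * Q n i j t \<sigma> (y-1)) / (real n)^2"
  proof -
    have I: "integrable (measure_pmf ?W) (\<lambda>x. c * indicator A x :: real)" for A c
      by (intro integrable_mult_right integrable_real_indicator) (auto simp: measure_pmf.emeasure_finite less_top[symmetric])
    have "(\<integral>x. ?f x \<partial>?W) = (\<integral>x. st n y * indicator (Ev i j y) x + dn n (y+1) * indicator (Ev i j (y+1)) x
      + up n (y-1) * indicator (Ev i j (y-1)) x \<partial>?W) / (real n)^2"
      by (rule integral_divide_zero)
    also have "(\<integral>x. st n y * indicator (Ev i j y) x + dn n (y+1) * indicator (Ev i j (y+1)) x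
      + up n (y-1) * indicator (Ev i j (y-1)) x \<partial>?W)
      = (\<integral>x. st n y * indicator (Ev i j y) x \<partial>?W) + (\<integral>x. dn n (y+1) * indicator (Ev i j (y+1)) x \<partial>?W)
      + (\<integral>x. up n (y-1) * indicator (Ev i j (y-1)) x \<partial>?W)"
      by (simp add: Bochner_Integration.integral_add[OF Bochner_Integration.integrable_add[OF I I] I] Bochner_Integration.integral_add[OF I I])
    finally show ?thesis unfolding Q_def by simp
  qed
  finally show ?thesis .
qed




lemma coef_sum:
  assumes "y \<ge> 1"
  shows "st n y + dn n (y+1) + up n (y-1) = (real n - 1)^2"
  using assms unfolding st_def dn_def up_def by (simp add: of_nat_diff power2_eq_square algebra_simps)

lemma st_nonneg: "st n y \<ge> 0"
proof -
  have e: "st n y = (real n - real y)^2 + (real y - 2) * (real y - 1)"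
    unfolding st_def dn_def up_def by (simp add: power2_eq_square algebra_simps)
  have "(real y - 2) * (real y - 1) \<ge> 0"
  proof (cases "y \<le> 1")
    case True
    then have "y = 0 \<or> y = 1" by auto
    then show ?thesis by auto
  next
    case False
    then show ?thesis by simp
  qed
  then show ?thesis unfolding e by simp
qed

lemma dn_nonneg: "1 \<le> y \<Longrightarrow> y \<le> n \<Longrightarrow> dn n (y+1) \<ge> 0"
  unfolding dn_def by simp

lemma up_nonneg: "1 \<le> y \<Longrightarrow> y \<le> n \<Longrightarrow> up n (y-1) \<ge> 0"
  unfolding up_def by (simp add: of_nat_diff)

lemma Q_zero_out:
  assumes n1: "n \<ge> 1" and sig: "bij_betw \<sigma> {1..n} {1..n}"
    and ij: "i \<in> {1..n}" "j \<in> {1..n}" "\<sigma> i < \<sigma> j" and y: "y \<notin> {1..n}"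
  shows "Q n i j t \<sigma> y = 0"
proof -
  have "Ev i j y \<inter> set_pmf (rtr_walk n t \<sigma>) = {}"
  proof (rule ccontr)
    assume "Ev i j y \<inter> set_pmf (rtr_walk n t \<sigma>) \<noteq> {}"
    then obtain \<tau> C where x: "(\<tau>, C) \<in> set_pmf (rtr_walk n t \<sigma>)" "\<tau> j = y"
      unfolding Ev_def by auto
    have "bij_betw \<tau> {1..n} {1..n}" using walk_inv[OF n1 sig ij x(1)] by simp
    then have "\<tau> j \<in> {1..n}" using ij(2) bij_betwE by blast
    then show False using x(2) y by simp
  qed
  then have "measure_pmf.prob (rtr_walk n t \<sigma>) (Ev i j y \<inter> set_pmf (rtr_walk n t \<sigma>)) = 0" by simp
  then show ?thesis unfolding Q_def by (simp add: measure_Int_set_pmf)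
qed

lemma Q_zero_time: "Q n i j 0 \<sigma> y = (if \<sigma> j = y then 1 else 0)"
  unfolding Q_def Ev_def by (simp add: indicator_def)

lemma F_bound:
  assumes n1: "n \<ge> 1" and fin: "finite M"
    and sig: "\<And>m. m \<in> M \<Longrightarrow> bij_betw (\<sigma> m) {1..n} {1..n} \<and> \<sigma> m i < \<sigma> m j"
    and ij: "i \<in> {1..n}" "j \<in> {1..n}" "i \<noteq> j"
    and inj: "inj_on (\<lambda>m. \<sigma> m j) M"
  shows "(\<Sum>m\<in>M. Q n i j t (\<sigma> m) y) \<le> ((real n - 1)^2 / (real n)^2)^t"
proof (induction t arbitrary: y)
  case 0
  have "(\<Sum>m\<in>M. Q n i j 0 (\<sigma> m) y) = real (card {m\<in>M. \<sigma> m j = y})"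
    unfolding Q_zero_time using fin by (simp add: sum.inter_filter[symmetric])
  also have "card {m\<in>M. \<sigma> m j = y} \<le> 1"
  proof -
    have f: "finite {m\<in>M. \<sigma> m j = y}" using fin by simp
    have "\<forall>a\<in>{m\<in>M. \<sigma> m j = y}. \<forall>b\<in>{m\<in>M. \<sigma> m j = y}. a = b"
      using inj unfolding inj_on_def by auto
    then show ?thesis using card_le_Suc0_iff_eq[OF f] by simp
  qed
  finally show ?case by simp
next
  case (Suc t)
  let ?B = "((real n - 1)^2 / (real n)^2)^t"
  show ?case
  proof (cases "y \<in> {1..n}")
    case False
    then have "Q n i j (Suc t) (\<sigma> m) y = 0" if "m \<in> M" for m
      using Q_zero_out[OF n1 _ ij(1,2) _ False] sig[OF that] by blast
    then show ?thesis by simp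
  next
    case True
    then have y1: "y \<ge> 1" "y \<le> n" by auto
    have "(\<Sum>m\<in>M. Q n i j (Suc t) (\<sigma> m) y) = (\<Sum>m\<in>M. (st n y * Q n i j t (\<sigma> m) y + dn n (y+1) * Q n i j t (\<sigma> m) (y+1)
            + up n (y-1) * Q n i j t (\<sigma> m) (y-1)) / (real n)^2)"
      using step_Q[OF n1 _ ij _ y1(1)] sig by (intro sum.cong) auto
    also have "\<dots> = (st n y * (\<Sum>m\<in>M. Q n i j t (\<sigma> m) y) + dn n (y+1) * (\<Sum>m\<in>M. Q n i j t (\<sigma> m) (y+1))
            + up n (y-1) * (\<Sum>m\<in>M. Q n i j t (\<sigma> m) (y-1))) / (real n)^2"
      by (simp add: sum_divide_distrib[symmetric] sum.distrib sum_distrib_left)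
    also have "\<dots> \<le> (st n y * ?B + dn n (y+1) * ?B + up n (y-1) * ?B) / (real n)^2"
    proof -
      have h1: "st n y * (\<Sum>m\<in>M. Q n i j t (\<sigma> m) y) \<le> st n y * ?B"
        by (rule mult_left_mono[OF Suc.IH st_nonneg])
      have h2: "dn n (y+1) * (\<Sum>m\<in>M. Q n i j t (\<sigma> m) (y+1)) \<le> dn n (y+1) * ?B"
        by (rule mult_left_mono[OF Suc.IH dn_nonneg[OF y1]])
      have h3: "up n (y-1) * (\<Sum>m\<in>M. Q n i j t (\<sigma> m) (y-1)) \<le> up n (y-1) * ?B"
        by (rule mult_left_mono[OF Suc.IH up_nonneg[OF y1]])
      show ?thesis by (rule divide_right_mono[OF add_mono[OF add_mono[OF h1 h2] h3]]) simp
    qed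
    also have "\<dots> = ?B * (st n y + dn n (y+1) + up n (y-1)) / (real n)^2"
      by (simp add: algebra_simps)
    also have "\<dots> = ((real n - 1)^2 / (real n)^2)^Suc t"
      unfolding coef_sum[OF y1(1)] by simp
    finally show ?thesis .
  qed
qed




definition Gd :: "nat \<Rightarrow> nat \<Rightarrow> ((nat \<Rightarrow> nat) \<times> nat set) set" where
  "Gd i j = {(\<tau>, C). i \<notin> C \<and> j \<notin> C}"

lemma Dg_eq:
  assumes n1: "n \<ge> 1" and ij: "i \<in> {1..n}" "j \<in> {1..n}" "i \<noteq> j"
  shows "measure_pmf.prob (rtr_walk n t \<sigma>) (Gd i j) = ((real n - 2) / real n)^t"
proof (induction t)
  case 0
  then show ?case unfolding Gd_def by simp
next
  case (Suc t)
  let ?W = "rtr_walk n t \<sigma>"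
  have ne: "{1..n} \<times> {1..n} \<noteq> {}" using n1 by auto
  have inner: "measure_pmf.prob ((\<lambda>(\<tau>, C).
       map_pmf (\<lambda>(c, p). (rtr_move n \<tau> c p, insert c C)) (pmf_of_set ({1..n} \<times> {1..n}))) x) (Gd i j)
     = (real n - 2) / real n * indicator (Gd i j) x" for x
  proof -
    obtain \<tau> C where xe: "x = (\<tau>, C)" by (cases x)
    have "measure_pmf.prob (map_pmf (\<lambda>(c, p). (rtr_move n \<tau> c p, insert c C))
            (pmf_of_set ({1..n} \<times> {1..n}))) (Gd i j)
      = real (card ({1..n} \<times> {1..n} \<inter> (\<lambda>(c, p). (rtr_move n \<tau> c p, insert c C)) -` Gd i j))
         / real (card ({1..n} \<times> {1..n}))"
      using ne by (simp add: measure_pmf_of_set)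
    also have "{1..n} \<times> {1..n} \<inter> (\<lambda>(c, p). (rtr_move n \<tau> c p, insert c C)) -` Gd i j
      = (if i \<notin> C \<and> j \<notin> C then ({1..n}-{i,j}) \<times> {1..n} else {})"
      unfolding Gd_def by auto
    also have "card ({1..n} \<times> {1..n}) = n * n" by (simp add: card_cartesian_product)
    finally have e: "measure_pmf.prob (map_pmf (\<lambda>(c, p). (rtr_move n \<tau> c p, insert c C))
            (pmf_of_set ({1..n} \<times> {1..n}))) (Gd i j)
       = (if i \<notin> C \<and> j \<notin> C then real ((n - 2) * n) else 0) / real (n * n)"
      using ij by (simp add: card_cartesian_product)
    have "real ((n - 2) * n) / real (n * n) = (real n - 2) / real n"
      using n1 ij by (cases "n \<ge> 2") (auto simp: of_nat_diff)
    then show ?thesis unfolding xe using e by (auto simp: indicator_def Gd_def)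
  qed
  have "measure_pmf.prob (rtr_walk n (Suc t) \<sigma>) (Gd i j)
      = (\<integral>x. measure_pmf.prob ((\<lambda>(\<tau>, C).
       map_pmf (\<lambda>(c, p). (rtr_move n \<tau> c p, insert c C)) (pmf_of_set ({1..n} \<times> {1..n}))) x) (Gd i j) \<partial>?W)"
    by (simp add: measure_bind_pmf_real)
  also have "\<dots> = (\<integral>x. (real n - 2) / real n * indicator (Gd i j) x \<partial>?W)"
    by (rule Bochner_Integration.integral_cong[OF refl inner])
  also have "\<dots> = (real n - 2) / real n * measure_pmf.prob ?W (Gd i j)"
    by simp
  finally show ?case using Suc.IH by simp
qed

lemma card_window: assumes d0: "d \<ge> 0" shows "real (card (window n k d)) \<le> 2 * d + 1"
proof (cases "window n k d = {}")
  case True then show ?thesis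
    using d0 by simp
next
  case False
  let ?W = "window n k d"
  have fin: "finite ?W" unfolding window_def by simp
  have mn: "Min ?W \<in> ?W" "Max ?W \<in> ?W" using Min_in Max_in fin False by auto
  have sub: "?W \<subseteq> {Min ?W..Max ?W}" using fin by auto
  have "card ?W \<le> card {Min ?W..Max ?W}" by (rule card_mono) (auto simp: sub)
  also have "\<dots> = Max ?W + 1 - Min ?W" by simp
  finally have c: "real (card ?W) \<le> real (Max ?W) + 1 - real (Min ?W)"
    using Min_le[OF fin mn(2)] by (simp add: of_nat_diff)
  have "real (Max ?W) \<le> real k + d" "real k - d \<le> real (Min ?W)"
    using mn unfolding window_def by auto
  then show ?thesis using c by simp
qed




lemma final_num:
  fixes n t :: nat and c d :: real
  assumes n3: "n \<ge> 3" and tb: "real t \<le> real n * ln (real n)"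
    and c1: "c \<le> 2 * d + 1" and c2: "c \<le> real n" and c0: "c \<ge> 0"
  shows "c * ((real n - 1)^2 / (real n * (real n - 2)))^t
     \<le> 2 * d + ((ln (real n))\<^sup>2 + 2 + real n * (exp (ln (real n) / (real n - 2)) - 1))"
proof -
  define r where "r = ((real n - 1)^2 / (real n * (real n - 2)))"
  have npos: "real n * (real n - 2) > 0" using n3 by simp
  have re: "r = 1 + 1 / (real n * (real n - 2))"
  proof -
    have e: "(real n - 1)^2 = real n * (real n - 2) + 1" by (simp add: power2_eq_square algebra_simps)
    show ?thesis unfolding r_def e using npos n3 by (simp add: add_divide_distrib)
  qed
  have r1: "r \<ge> 1" unfolding re using npos by simp
  have "r \<le> exp (1 / (real n * (real n - 2)))" unfolding re
    using exp_ge_add_one_self[of "1 / (real n * (real n - 2))"] by simp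
  then have "r^t \<le> exp (1 / (real n * (real n - 2)))^t"
    using r1 by (intro power_mono) auto
  also have "\<dots> = exp (real t * (1 / (real n * (real n - 2))))"
    by (rule exp_of_nat_mult[symmetric])
  also have "\<dots> \<le> exp (ln (real n) / (real n - 2))"
  proof -
    have "real t * (1 / (real n * (real n - 2))) = real t / (real n * (real n - 2))" by simp
    also have "\<dots> \<le> (real n * ln (real n)) / (real n * (real n - 2))"
      using tb npos by (intro divide_right_mono) auto
    also have "\<dots> = ln (real n) / (real n - 2)" using n3 by simp
    finally show ?thesis by simp
  qed
  finally have rt: "r^t \<le> exp (ln (real n) / (real n - 2))" .
  have rt1: "r^t \<ge> 1" using r1 by simp
  have "c * r^t = c + c * (r^t - 1)" by (simp add: algebra_simps)
  also have "\<dots> \<le> (2 * d + 1) + real n * (exp (ln (real n) / (real n - 2)) - 1)"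
    using c1 c2 c0 rt rt1 by (intro add_mono mult_mono) auto
  also have "\<dots> \<le> 2 * d + ((ln (real n))\<^sup>2 + 2 + real n * (exp (ln (real n) / (real n - 2)) - 1))"
    by simp
  finally show ?thesis unfolding r_def .
qed




lemma main_bound:
  fixes n i j t :: nat and \<delta> :: real and \<sigma> :: "nat \<Rightarrow> nat \<Rightarrow> nat"
  assumes n3: "n \<ge> 3" and ij: "i \<in> {1..n}" "j \<in> {1..n}" "i \<noteq> j" and d0: "\<delta> \<ge> 0"
    and tb: "real t \<le> real n * ln (real n)"
    and sg: "\<forall>m \<in> {2..n-1}. \<sigma> m permutes {1..n} \<and> \<sigma> m i = 1 \<and> \<sigma> m j = m"
  shows "(\<Sum>m = 2..n-1. cond_pair_prob n t (\<sigma> m) i j ({1..n} \<times> window n j \<delta>))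
     \<le> 2 * \<delta> + ((ln (real n))\<^sup>2 + 2 + real n * (exp (ln (real n) / (real n - 2)) - 1))"
proof -
  define W where "W = window n j \<delta>"
  define M where "M = {2..n-1}"
  define Dt where "Dt = ((real n - 2) / real n)^t"
  have n1: "n \<ge> 1" using n3 by simp
  have finW: "finite W" unfolding W_def window_def by simp
  have sig: "bij_betw (\<sigma> m) {1..n} {1..n} \<and> \<sigma> m i < \<sigma> m j" if "m \<in> M" for m
    using sg that permutes_imp_bij unfolding M_def by fastforce
  have den: "measure_pmf.prob (rtr_walk n t (\<sigma> m)) {(\<tau>, C). i \<in> A_set n C \<and> j \<in> A_set n C} = Dt" for m
  proof -
    have "{(\<tau>, C). i \<in> A_set n C \<and> j \<in> A_set n C} = Gd i j"
      using ij unfolding A_set_def Gd_def by auto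
    then show ?thesis unfolding Dt_def using Dg_eq[OF n1 ij] by simp
  qed
  have num: "measure_pmf.prob (rtr_walk n t (\<sigma> m))
      {(\<tau>, C). (\<tau> i, \<tau> j) \<in> {1..n} \<times> W \<and> i \<in> A_set n C \<and> j \<in> A_set n C}
      = (\<Sum>y\<in>W. Q n i j t (\<sigma> m) y)" if m: "m \<in> M" for m
  proof -
    let ?P = "rtr_walk n t (\<sigma> m)"
    let ?A = "{(\<tau>, C). (\<tau> i, \<tau> j) \<in> {1..n} \<times> W \<and> i \<in> A_set n C \<and> j \<in> A_set n C}"
    let ?B = "\<Union>y\<in>W. Ev i j y"
    have "?A \<inter> set_pmf ?P = ?B \<inter> set_pmf ?P"
    proof (intro equalityI subsetI)
      fix x assume x: "x \<in> ?A \<inter> set_pmf ?P"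
      then show "x \<in> ?B \<inter> set_pmf ?P" unfolding Ev_def A_set_def by auto
    next
      fix x assume x: "x \<in> ?B \<inter> set_pmf ?P"
      obtain \<tau> C where xe: "x = (\<tau>, C)" by (cases x)
      have sm: "bij_betw (\<sigma> m) {1..n} {1..n}" "\<sigma> m i < \<sigma> m j" using sig[OF m] by auto
      have "bij_betw \<tau> {1..n} {1..n}"
        using walk_inv[OF n1 sm(1) ij(1,2) sm(2), where x=x and t=t] x xe by auto
      then have "\<tau> i \<in> {1..n}" by (rule bij_betw_apply[OF _ ij(1)])
      then show "x \<in> ?A \<inter> set_pmf ?P" using x ij unfolding xe Ev_def A_set_def by auto
    qed
    note e = this
    have "measure_pmf.prob ?P ?A = measure_pmf.prob ?P (?A \<inter> set_pmf ?P)"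
      by (rule measure_Int_set_pmf[symmetric])
    also have "\<dots> = measure_pmf.prob ?P (?B \<inter> set_pmf ?P)" unfolding e ..
    also have "\<dots> = measure_pmf.prob ?P ?B" by (rule measure_Int_set_pmf)
    also have "\<dots> = (\<Sum>y\<in>W. measure_pmf.prob ?P (Ev i j y))"
      by (rule measure_pmf.finite_measure_finite_Union[OF finW])
         (auto simp: disjoint_family_on_def Ev_def)
    finally show ?thesis unfolding Q_def .
  qed
  have "(\<Sum>m\<in>M. cond_pair_prob n t (\<sigma> m) i j ({1..n} \<times> W))
      = (\<Sum>m\<in>M. (\<Sum>y\<in>W. Q n i j t (\<sigma> m) y) / Dt)"
    unfolding cond_pair_prob_def using num den by (intro sum.cong) auto
  also have "\<dots> = (\<Sum>y\<in>W. (\<Sum>m\<in>M. Q n i j t (\<sigma> m) y)) / Dt"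
    by (simp add: sum_divide_distrib[symmetric] sum.swap[of _ M W])
  also have "\<dots> \<le> (\<Sum>y\<in>W. ((real n - 1)^2 / (real n)^2)^t) / Dt"
  proof -
    have inj: "inj_on (\<lambda>m. \<sigma> m j) M" using sg unfolding M_def inj_on_def by auto
    have "(\<Sum>m\<in>M. Q n i j t (\<sigma> m) y) \<le> ((real n - 1)^2 / (real n)^2)^t" for y
      by (rule F_bound[OF n1 _ sig ij inj]) (auto simp: M_def)
    moreover have "Dt > 0" unfolding Dt_def using n3 by simp
    ultimately show ?thesis by (intro divide_right_mono sum_mono) auto
  qed
  also have "\<dots> = real (card W) * ((real n - 1)^2 / (real n * (real n - 2)))^t"
  proof -
    have "((real n - 1)^2 / (real n)^2)^t / Dt = (((real n - 1)^2 / (real n)^2) / ((real n - 2) / real n))^t"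
      unfolding Dt_def by (rule power_divide[symmetric])
    also have "((real n - 1)^2 / (real n)^2) / ((real n - 2) / real n) = (real n - 1)^2 / (real n * (real n - 2))"
      using n3 by (simp add: field_simps power2_eq_square)
    finally have e: "((real n - 1)^2 / (real n)^2)^t / Dt = ((real n - 1)^2 / (real n * (real n - 2)))^t" .
    show ?thesis by (simp add: e[symmetric])
  qed
  also have "\<dots> \<le> 2 * \<delta> + ((ln (real n))\<^sup>2 + 2 + real n * (exp (ln (real n) / (real n - 2)) - 1))"
  proof (rule final_num[OF n3 tb])
    show "real (card W) \<le> 2 * \<delta> + 1" unfolding W_def by (rule card_window[OF d0])
    have "card W \<le> card {1..n}" unfolding W_def window_def by (rule card_mono) auto
    then show "real (card W) \<le> real n" by simp
  qed simp
  finally show ?thesis unfolding M_def W_def .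
qed


theorem corollary1:
  shows "\<exists>g :: nat \<Rightarrow> real. g \<in> \<Theta>(\<lambda>n. (ln (real n))\<^sup>2) \<and>
    (\<forall>n i j (\<delta>::real) t (\<sigma> :: nat \<Rightarrow> nat \<Rightarrow> nat).
       i \<in> {1..n} \<and> j \<in> {1..n} \<and> i \<noteq> j \<and> \<delta> \<ge> 0 \<and>
       real t \<le> real n * ln (real n) \<and>
       (\<forall>m \<in> {2..n-1}. \<sigma> m permutes {1..n} \<and> \<sigma> m i = 1 \<and> \<sigma> m j = m)
       \<longrightarrow> (\<Sum>m = 2..n-1. cond_pair_prob n t (\<sigma> m) i j ({1..n} \<times> window n j \<delta>))
           \<le> 2 * \<delta> + g n)"
proof -
  define g :: "nat \<Rightarrow> real" where
    "g = (\<lambda>n. (ln (real n))\<^sup>2 + 2 + real n * (exp (ln (real n) / (real n - 2)) - 1))"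
  have th: "g \<in> \<Theta>(\<lambda>n. (ln (real n))\<^sup>2)" unfolding g_def by real_asymp
  have bd: "(\<Sum>m = 2..n-1. cond_pair_prob n t (\<sigma> m) i j ({1..n} \<times> window n j \<delta>)) \<le> 2 * \<delta> + g n"
    if H: "i \<in> {1..n} \<and> j \<in> {1..n} \<and> i \<noteq> j \<and> \<delta> \<ge> 0 \<and>
       real t \<le> real n * ln (real n) \<and>
       (\<forall>m \<in> {2..n-1}. \<sigma> m permutes {1..n} \<and> \<sigma> m i = 1 \<and> \<sigma> m j = m)"
    for n i j \<delta> t and \<sigma> :: "nat \<Rightarrow> nat \<Rightarrow> nat"
  proof (cases "n \<ge> 3")
    case True
    have "i \<in> {1..n}" "j \<in> {1..n}" "i \<noteq> j" "\<delta> \<ge> 0" "real t \<le> real n * ln (real n)"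
       "\<forall>m \<in> {2..n-1}. \<sigma> m permutes {1..n} \<and> \<sigma> m i = 1 \<and> \<sigma> m j = m"
      using H by auto
    from main_bound[OF True this] show ?thesis unfolding g_def .
  next
    case False
    then have e: "{2..n-1} = {}" by auto
    from False have "n = 0 \<or> n = 1 \<or> n = 2" by auto
    then have "g n \<ge> 0" unfolding g_def by auto
    then show ?thesis using e H by simp
  qed
  show ?thesis by (rule exI[of _ g]) (use th bd in blast)
qed

end
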